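(* There is no binary orthogonal array $OA(16\lambda, 11, 2, 4)$ for $\lambda = 6$, and there is none for $\lambda = 7$. That is, there is no $96 \times 11$ binary array and no $112 \times 11$ binary array of strength $4$.
   Context: For positive integers $n$, $t$, $\lambda$ with $t < n$, a binary orthogonal array $OA(2^t\lambda, n, 2, t)$ (also called a $t$-$(2,n,\lambda)$ orthogonal array) is a $\lambda 2^t \times n$ matrix with entries in $\mathbb{F}_2 = \{0,1\}$ such that, for every choice of $t$ distinct columns, every binary $t$-tuple appears as the restriction to those columns of exactly $\lambda$ rows. Rows may repeat. The number $t$ is the strength, $N = 2^t\lambda$ is the number of runs (rows), and $n$ is the number of factors (columns). *)

theory Defs
  imports Main
begin

text \<open>A binary array with N rows and n columns is a list of N rows; each row is a
function from column indices to \<open>bool\<close> (= F_2), only indices below n being relevant.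
Rows may repeat (the list records multiplicities).\<close>

definition binary_OA :: "(nat \<Rightarrow> bool) list \<Rightarrow> nat \<Rightarrow> nat \<Rightarrow> nat \<Rightarrow> bool" where
  "binary_OA A n t lam \<longleftrightarrow>
     length A = 2 ^ t * lam \<and>
     (\<forall>T. T \<subseteq> {0..<n} \<and> card T = t \<longrightarrow>
        (\<forall>u :: nat \<Rightarrow> bool.
           length (filter (\<lambda>r. \<forall>j\<in>T. r j = u j) A) = lam))"

end

theory Submission
  imports Defs
begin

definition chi :: "(nat \<Rightarrow> bool) \<Rightarrow> nat set \<Rightarrow> int" where
  "chi r S = (-1) ^ card {j\<in>S. r j}"

definition FF :: "(nat \<Rightarrow> bool) list \<Rightarrow> nat set \<Rightarrow> int" where
  "FF A S = (\<Sum>i<length A. chi (A!i) S)"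

definition cntp :: "(nat \<Rightarrow> bool) list \<Rightarrow> nat set \<Rightarrow> (nat \<Rightarrow> bool) \<Rightarrow> nat" where
  "cntp A U u = card {i\<in>{..<length A}. \<forall>j\<in>U. (A!i) j = u j}"

definition binom :: "nat set \<Rightarrow> nat \<Rightarrow> nat set set" where
  "binom X k = {Y. Y \<subseteq> X \<and> card Y = k}"

lemma finite_binom[simp]: "finite X \<Longrightarrow> finite (binom X k)"
  unfolding binom_def by (auto intro: finite_subset[of _ "Pow X"])

lemma card_binom: "finite X \<Longrightarrow> card (binom X k) = card X choose k"
  unfolding binom_def by (rule n_subsets)

lemma pow_binom:
  fixes x :: int
  assumes "finite R"
  shows "(\<Sum>U\<in>Pow R. x ^ card U) = (1 + x) ^ card R"
  using assms
proof (induction R rule: finite_induct)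
  case empty then show ?case by simp
next
  case (insert a R)
  have inj: "inj_on (insert a) (Pow R)" using insert.hyps(2)
    unfolding inj_on_def by (metis Pow_iff insert_ident subset_iff)
  have disj: "Pow R \<inter> insert a ` Pow R = {}" using insert.hyps(2) by auto
  have "(\<Sum>U\<in>Pow (insert a R). x ^ card U) = (\<Sum>U\<in>Pow R. x ^ card U) + (\<Sum>U\<in>insert a ` Pow R. x ^ card U)"
    unfolding Pow_insert by (rule sum.union_disjoint) (use insert.hyps(1) disj in auto)
  also have "(\<Sum>U\<in>insert a ` Pow R. x ^ card U) = (\<Sum>U\<in>Pow R. x ^ card (insert a U))"
    by (simp add: sum.reindex inj)
  also have "\<dots> = (\<Sum>U\<in>Pow R. x * x ^ card U)"
  proof (rule sum.cong[OF refl])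
    fix U assume "U \<in> Pow R"
    then have "finite U" "a \<notin> U" using insert.hyps finite_subset by auto
    then show "x ^ card (insert a U) = x * x ^ card U" by simp
  qed
  finally show ?case using insert by (simp add: sum_distrib_left[symmetric] algebra_simps)
qed

lemma chi_expand:
  assumes "finite S"
  shows "chi r S = (\<Sum>U\<in>Pow S. (-2) ^ card U * (if \<forall>j\<in>U. r j then 1 else 0))"
proof -
  let ?R = "{j\<in>S. r j}"
  have "(\<Sum>U\<in>Pow S. (-2::int) ^ card U * (if \<forall>j\<in>U. r j then 1 else 0))
      = (\<Sum>U\<in>Pow S. if \<forall>j\<in>U. r j then (-2) ^ card U else 0)"
    by (rule sum.cong) auto
  also have "\<dots> = (\<Sum>U\<in>{U\<in>Pow S. \<forall>j\<in>U. r j}. (-2::int) ^ card U)"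
    by (rule sum.inter_filter[symmetric]) (use assms in auto)
  also have "{U\<in>Pow S. \<forall>j\<in>U. r j} = Pow ?R" by auto
  also have "(\<Sum>U\<in>Pow ?R. (-2::int) ^ card U) = (1 + -2) ^ card ?R"
    by (rule pow_binom) (use assms in auto)
  finally show ?thesis unfolding chi_def by simp
qed

lemma FF_expand:
  assumes "finite S"
  shows "FF A S = (\<Sum>U\<in>Pow S. (-2) ^ card U * int (cntp A U (\<lambda>_. True)))"
proof -
  have "FF A S = (\<Sum>i<length A. \<Sum>U\<in>Pow S. (-2) ^ card U * (if \<forall>j\<in>U. (A!i) j then 1 else 0))"
    unfolding FF_def using chi_expand[OF assms] by simp
  also have "\<dots> = (\<Sum>U\<in>Pow S. \<Sum>i<length A. (-2) ^ card U * (if \<forall>j\<in>U. (A!i) j then 1 else 0))"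
    by (rule sum.swap)
  also have "\<dots> = (\<Sum>U\<in>Pow S. (-2) ^ card U * int (cntp A U (\<lambda>_. True)))"
  proof (rule sum.cong[OF refl])
    fix U
    have "(\<Sum>i<length A. (if \<forall>j\<in>U. (A!i) j then 1 else 0)) = (\<Sum>i\<in>{i\<in>{..<length A}. \<forall>j\<in>U. (A!i) j}. (1::int))"
      by (rule sum.inter_filter[symmetric]) auto
    also have "\<dots> = int (cntp A U (\<lambda>_. True))" unfolding cntp_def by simp
    finally show "(\<Sum>i<length A. (-2) ^ card U * (if \<forall>j\<in>U. (A!i) j then 1 else 0)) = (-2) ^ card U * int (cntp A U (\<lambda>_. True))"
      by (simp add: sum_distrib_left[symmetric])
  qed
  finally show ?thesis .
qed

lemma oa_base:
  assumes oa: "binary_OA A 11 4 lam" and U: "U \<subseteq> {0..<11}" "card U = 4"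
  shows "cntp A U u = lam"
proof -
  have "length (filter (\<lambda>r. \<forall>j\<in>U. r j = u j) A) = lam" using oa U unfolding binary_OA_def by auto
  then show ?thesis unfolding cntp_def length_filter_conv_card by (simp add: lessThan_def)
qed

lemma oa_cnt:
  assumes oa: "binary_OA A 11 4 lam"
  shows "U \<subseteq> {0..<11} \<Longrightarrow> card U \<le> 4 \<Longrightarrow> cntp A U u * 2 ^ card U = 16 * lam"
proof -
  have main: "\<forall>U u. U \<subseteq> {0..<11} \<longrightarrow> card U + d = 4 \<longrightarrow> cntp A U u * 2 ^ card U = 16 * lam" for d
  proof (induction d)
    case 0 show ?case
    proof (intro allI impI)
      fix U :: "nat set" and u :: "nat \<Rightarrow> bool" assume U: "U \<subseteq> {0..<11}" and c: "card U + 0 = 4"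
      then have c4: "card U = 4" by simp
      show "cntp A U u * 2 ^ card U = 16 * lam" unfolding c4 using oa_base[OF oa U c4] by simp
    qed
  next
    case (Suc d)
    show ?case
    proof (intro allI impI)
      fix U :: "nat set" and u :: "nat \<Rightarrow> bool" assume U: "U \<subseteq> {0..<11}" and c: "card U + Suc d = 4"
      have fU: "finite U" using U finite_subset by blast
      have "\<not> {0..<11} \<subseteq> U"
      proof
        assume "{0..<11} \<subseteq> U"
        then have "card {0..<11::nat} \<le> card U" using fU card_mono by blast
        then show False using c by simp
      qed
      then obtain j where j0: "j \<in> {0..<11}" "j \<notin> U" by blast
      then have j: "j < 11" "j \<notin> U" by auto
      let ?P = "\<lambda>b. {i\<in>{..<length A}. \<forall>k\<in>insert j U. (A!i) k = (u(j:=b)) k}"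
      have Pchar: "i \<in> ?P b \<longleftrightarrow> i < length A \<and> (A!i) j = b \<and> (\<forall>k\<in>U. (A!i) k = u k)" for i b
      proof -
        have uu: "\<forall>k\<in>U. (u(j:=b)) k = u k" using j(2) by auto
        have e1: "(\<forall>k\<in>insert j U. (A!i) k = (u(j:=b)) k) \<longleftrightarrow> (A!i) j = b \<and> (\<forall>k\<in>U. (A!i) k = (u(j:=b)) k)"
          by simp
        have e2: "(\<forall>k\<in>U. (A!i) k = (u(j:=b)) k) = (\<forall>k\<in>U. (A!i) k = u k)"
        proof (rule ball_cong[OF refl])
          fix k assume "k \<in> U"
          then have "(u(j:=b)) k = u k" using uu by blast
          then show "((A!i) k = (u(j:=b)) k) = ((A!i) k = u k)" by (simp only:)
        qed
        have "(\<forall>k\<in>insert j U. (A!i) k = (u(j:=b)) k) \<longleftrightarrow> (A!i) j = b \<and> (\<forall>k\<in>U. (A!i) k = u k)"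
          using e1 e2 by blast
        then show ?thesis by simp
      qed
      have split: "{i\<in>{..<length A}. \<forall>k\<in>U. (A!i) k = u k} = ?P True \<union> ?P False"
      proof (rule set_eqI)
        fix i
        show "i \<in> {i\<in>{..<length A}. \<forall>k\<in>U. (A!i) k = u k} \<longleftrightarrow> i \<in> ?P True \<union> ?P False"
          unfolding Un_iff Pchar by (cases "(A!i) j") simp_all
      qed
      have disj: "?P True \<inter> ?P False = {}" unfolding disjoint_iff Pchar by simp
      have cj: "card (insert j U) = Suc (card U)" using fU j(2) by simp
      have Uj: "insert j U \<subseteq> {0..<11}" using U j by auto
      have c2: "card (insert j U) + d = 4" using c cj by simp
      have h1: "cntp A (insert j U) (u(j:=True)) * 2 ^ Suc (card U) = 16*lam"
        using Suc.IH Uj c2 unfolding cj[symmetric] by blast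
      have h2: "cntp A (insert j U) (u(j:=False)) * 2 ^ Suc (card U) = 16*lam"
        using Suc.IH Uj c2 unfolding cj[symmetric] by blast
      have e: "cntp A U u = cntp A (insert j U) (u(j:=True)) + cntp A (insert j U) (u(j:=False))"
        unfolding cntp_def split by (rule card_Un_disjoint) (use disj in auto)
      show "cntp A U u * 2 ^ card U = 16 * lam"
      proof -
        let ?c1 = "cntp A (insert j U) (u(j:=True))" and ?c2 = "cntp A (insert j U) (u(j:=False))"
        have a1: "?c1 * 2 ^ card U * 2 = 16 * lam" by (metis h1 mult.assoc mult.commute power_Suc)
        have a2: "?c2 * 2 ^ card U * 2 = 16 * lam" by (metis h2 mult.assoc mult.commute power_Suc)
        have "?c1 * 2 ^ card U = 8 * lam" "?c2 * 2 ^ card U = 8 * lam" using a1 a2 by linarith+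
        then show ?thesis unfolding e by (simp add: add_mult_distrib)
      qed
    qed
  qed
  show "U \<subseteq> {0..<11} \<Longrightarrow> card U \<le> 4 \<Longrightarrow> cntp A U u * 2 ^ card U = 16 * lam"
    using main[of "4 - card U"] by auto
qed

lemma term_small:
  assumes oa: "binary_OA A 11 4 lam" and "U \<subseteq> {0..<11}" "card U \<le> 4"
  shows "(-2) ^ card U * int (cntp A U (\<lambda>_. True)) = (-1)^card U * (16 * int lam)"
proof -
  have "cntp A U (\<lambda>_. True) * 2 ^ card U = 16 * lam" by (rule oa_cnt[OF oa assms(2,3)])
  then have "int (cntp A U (\<lambda>_. True)) * 2 ^ card U = 16 * int lam"
    by (metis of_nat_mult of_nat_numeral of_nat_power)
  moreover have "(-2::int) ^ card U = (-1)^card U * 2 ^ card U"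
    by (metis mult_minus1 power_mult_distrib mult_neg_numeral_simps(3)  mult.right_neutral)
  ultimately show ?thesis by (simp add: algebra_simps)
qed

lemma FF_small:
  assumes oa: "binary_OA A 11 4 lam" and S: "S \<subseteq> {0..<11}" "card S \<le> 4"
  shows "FF A S = (if S = {} then 16 * int lam else 0)"
proof -
  have fS: "finite S" using S finite_subset by blast
  have "FF A S = (\<Sum>U\<in>Pow S. (-1)^card U * (16 * int lam))"
    unfolding FF_expand[OF fS]
  proof (rule sum.cong[OF refl])
    fix U assume "U \<in> Pow S"
    then have "card U \<le> card S" using card_mono[OF fS] by auto
    then have "U \<subseteq> {0..<11}" "card U \<le> 4" using S \<open>U \<in> Pow S\<close> by auto
    then show "(-2) ^ card U * int (cntp A U (\<lambda>_. True)) = (-1)^card U * (16 * int lam)"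
      by (rule term_small[OF oa])
  qed
  also have "\<dots> = (\<Sum>U\<in>Pow S. (-1)^card U) * (16 * int lam)" by (simp add: sum_distrib_right)
  also have "(\<Sum>U\<in>Pow S. (-1::int)^card U) = (1 + -1)^card S" by (rule pow_binom[OF fS])
  finally show ?thesis using fS by auto
qed

definition ee :: "nat \<Rightarrow> int" where "ee s = (\<Sum>k\<le>4. (-1)^k * int (s choose k))"

definition sig :: "(nat \<Rightarrow> bool) list \<Rightarrow> nat set \<Rightarrow> int" where
  "sig A S = (\<Sum>U\<in>binom S 5. int (cntp A U (\<lambda>_. True)))"

lemma FF_big:
  assumes oa: "binary_OA A 11 4 lam" and S: "S \<subseteq> {0..<11}"
  shows "\<exists>X. FF A S = 16 * int lam * ee (card S) - 32 * sig A S + 64 * X"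
proof -
  have fS: "finite S" using S finite_subset by blast
  let ?g = "\<lambda>U. (-2::int) ^ card U * int (cntp A U (\<lambda>_. True))"
  define P1 where "P1 = {U\<in>Pow S. card U \<le> 4}"
  define P3 where "P3 = {U\<in>Pow S. 6 \<le> card U}"
  have PS: "Pow S = P1 \<union> (binom S 5 \<union> P3)" unfolding P1_def P3_def binom_def by auto
  have fin: "finite P1" "finite P3" "finite (binom S 5)" using fS unfolding P1_def P3_def by auto
  have d1: "binom S 5 \<inter> P3 = {}" "P1 \<inter> (binom S 5 \<union> P3) = {}" unfolding P1_def P3_def binom_def by auto
  have "FF A S = sum ?g P1 + (sum ?g (binom S 5) + sum ?g P3)"
    unfolding FF_expand[OF fS] PS
    using sum.union_disjoint[OF fin(3) fin(2) d1(1), of ?g] sum.union_disjoint[OF fin(1) _ d1(2), of ?g] fin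
    by simp
  moreover have "sum ?g P1 = 16 * int lam * ee (card S)"
  proof -
    have "sum ?g P1 = (\<Sum>U\<in>P1. (-1)^card U * (16 * int lam))"
      by (rule sum.cong[OF refl], rule term_small[OF oa]) (use S card_mono[OF fS] in \<open>auto simp: P1_def\<close>)
    also have "\<dots> = (\<Sum>U\<in>P1. (-1::int)^card U) * (16 * int lam)" by (simp add: sum_distrib_right)
    also have "(\<Sum>U\<in>P1. (-1::int)^card U) = ee (card S)"
    proof -
      have P1U: "P1 = \<Union>(binom S ` {..4})" unfolding P1_def binom_def by auto
      have disjB: "\<forall>i\<in>{..4::nat}. \<forall>j\<in>{..4}. i \<noteq> j \<longrightarrow> binom S i \<inter> binom S j = {}"
        by (auto simp: binom_def)
      have "(\<Sum>U\<in>P1. (-1::int)^card U) = (\<Sum>k\<le>4. \<Sum>U\<in>binom S k. (-1::int)^card U)"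
        unfolding P1U by (rule sum.UNION_disjoint) (use fS disjB in auto)
      also have "\<dots> = (\<Sum>k\<le>4. (-1)^k * int (card S choose k))"
      proof (rule sum.cong[OF refl])
        fix k
        have "(\<Sum>U\<in>binom S k. (-1::int)^card U) = (\<Sum>U\<in>binom S k. (-1::int)^k)"
          by (rule sum.cong) (auto simp: binom_def)
        then show "(\<Sum>U\<in>binom S k. (-1::int)^card U) = (-1)^k * int (card S choose k)"
          using card_binom[OF fS, of k] by simp
      qed
      finally show ?thesis unfolding ee_def .
    qed
    finally show ?thesis by simp
  qed
  moreover have "sum ?g (binom S 5) = - 32 * sig A S"
  proof -
    have "sum ?g (binom S 5) = (\<Sum>U\<in>binom S 5. (-32) * int (cntp A U (\<lambda>_. True)))"
      by (rule sum.cong) (auto simp: binom_def)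
    then show ?thesis unfolding sig_def by (simp add: sum_distrib_left)
  qed
  moreover have "64 dvd sum ?g P3"
  proof (rule dvd_sum)
    fix U assume "U \<in> P3"
    then have "6 \<le> card U" unfolding P3_def by simp
    define m where "m = card U - 6"
    have m: "card U = m + 6" using \<open>6 \<le> card U\<close> unfolding m_def by simp
    have "?g U = 64 * ((-2) ^ m * int (cntp A U (\<lambda>_. True)))"
      unfolding m by (simp add: power_add)
    then show "64 dvd ?g U" by (metis dvd_triv_left)
  qed
  ultimately show ?thesis by (auto elim!: dvdE)
qed

lemma card_supsets:
  assumes X: "finite X" and T: "T \<subseteq> X" "card T = j" and jk: "j \<le> k"
  shows "card {Y\<in>binom X k. T \<subseteq> Y} = (card X - j) choose (k - j)"
proof -
  have fT: "finite T" using X T finite_subset by blast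
  have "bij_betw (\<lambda>Y. Y - T) {Y\<in>binom X k. T \<subseteq> Y} (binom (X - T) (k - j))"
  proof (rule bij_betw_byWitness[where f' = "\<lambda>V. V \<union> T"])
    show "\<forall>Y\<in>{Y\<in>binom X k. T \<subseteq> Y}. (Y - T) \<union> T = Y" by auto
    show "\<forall>V\<in>binom (X - T) (k - j). (V \<union> T) - T = V" by (auto simp: binom_def)
    show "(\<lambda>Y. Y - T) ` {Y\<in>binom X k. T \<subseteq> Y} \<subseteq> binom (X - T) (k - j)"
      using T fT by (auto simp: binom_def card_Diff_subset)
    show "(\<lambda>V. V \<union> T) ` binom (X - T) (k - j) \<subseteq> {Y\<in>binom X k. T \<subseteq> Y}"
    proof
      fix Y assume "Y \<in> (\<lambda>V. V \<union> T) ` binom (X - T) (k - j)"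
      then obtain V where V: "V \<subseteq> X - T" "card V = k - j" "Y = V \<union> T" by (auto simp: binom_def)
      have "finite V" using V X finite_subset by blast
      moreover have "V \<inter> T = {}" using V by auto
      ultimately have "card Y = card V + card T" using V fT card_Un_disjoint by metis
      then show "Y \<in> {Y\<in>binom X k. T \<subseteq> Y}" using V T jk by (auto simp: binom_def)
    qed
  qed
  then have "card {Y\<in>binom X k. T \<subseteq> Y} = card (binom (X - T) (k - j))" by (rule bij_betw_same_card)
  also have "\<dots> = card (X - T) choose (k - j)" by (rule card_binom) (use X in auto)
  also have "card (X - T) = card X - j" using T fT by (simp add: card_Diff_subset)
  finally show ?thesis .
qed

lemma DC:
  fixes f :: "nat set \<Rightarrow> int"
  assumes X: "finite X" and jk: "j \<le> k"
  shows "(\<Sum>Y\<in>binom X k. \<Sum>T\<in>binom Y j. f T) = int ((card X - j) choose (k - j)) * (\<Sum>T\<in>binom X j. f T)"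
proof -
  have "(\<Sum>Y\<in>binom X k. \<Sum>T\<in>binom Y j. f T) = (\<Sum>Y\<in>binom X k. \<Sum>T\<in>binom X j. if T \<subseteq> Y then f T else 0)"
  proof (rule sum.cong[OF refl])
    fix Y assume "Y \<in> binom X k"
    then have "binom Y j = {T\<in>binom X j. T \<subseteq> Y}" by (auto simp: binom_def)
    then show "(\<Sum>T\<in>binom Y j. f T) = (\<Sum>T\<in>binom X j. if T \<subseteq> Y then f T else 0)"
      using X by (simp add: sum.inter_filter)
  qed
  also have "\<dots> = (\<Sum>T\<in>binom X j. \<Sum>Y\<in>binom X k. if T \<subseteq> Y then f T else 0)" by (rule sum.swap)
  also have "\<dots> = (\<Sum>T\<in>binom X j. int ((card X - j) choose (k - j)) * f T)"
  proof (rule sum.cong[OF refl])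
    fix T assume T: "T \<in> binom X j"
    have "(\<Sum>Y\<in>binom X k. if T \<subseteq> Y then f T else 0) = (\<Sum>Y\<in>{Y\<in>binom X k. T \<subseteq> Y}. f T)"
      using X by (subst sum.inter_filter) auto
    also have "\<dots> = int (card {Y\<in>binom X k. T \<subseteq> Y}) * f T" by simp
    also have "card {Y\<in>binom X k. T \<subseteq> Y} = (card X - j) choose (k - j)"
      using card_supsets[OF X _ _ jk] T by (auto simp: binom_def)
    finally show "(\<Sum>Y\<in>binom X k. if T \<subseteq> Y then f T else 0) = int ((card X - j) choose (k - j)) * f T" .
  qed
  finally show ?thesis by (simp add: sum_distrib_left)
qed

definition agree :: "(nat \<Rightarrow> bool) \<Rightarrow> (nat \<Rightarrow> bool) \<Rightarrow> bool" where
  "agree r r' \<longleftrightarrow> (\<forall>j<11. r j = r' j)"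

lemma agree_sym: "agree r r' \<longleftrightarrow> agree r' r" unfolding agree_def by auto

lemma chi_sq: "chi r S * chi r S = 1"
  unfolding chi_def by (rule minus_one_mult_self)

lemma chi_agree: "agree r r' \<Longrightarrow> S \<subseteq> {0..<11} \<Longrightarrow> chi r S = chi r' S"
proof -
  assume a: "agree r r'" and S: "S \<subseteq> {0..<11}"
  have "{j\<in>S. r j} = {j\<in>S. r' j}" using a S unfolding agree_def by auto
  then show ?thesis unfolding chi_def by simp
qed

lemma chi_prod:
  assumes "finite S" "finite T"
  shows "chi r S * chi r T = chi r ((S - T) \<union> (T - S))"
proof -
  let ?a = "card {j\<in>S - T. r j}" and ?b = "card {j\<in>T - S. r j}" and ?c = "card {j\<in>S \<inter> T. r j}"
  have f: "finite {j\<in>S - T. r j}" "finite {j\<in>T - S. r j}" "finite {j\<in>S \<inter> T. r j}" using assms by auto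
  have "{j\<in>S. r j} = {j\<in>S - T. r j} \<union> {j\<in>S \<inter> T. r j}" by auto
  then have cS: "card {j\<in>S. r j} = ?a + ?c" using f by (simp add: card_Un_disjoint disjoint_iff)
  have "{j\<in>T. r j} = {j\<in>T - S. r j} \<union> {j\<in>S \<inter> T. r j}" by auto
  then have cT: "card {j\<in>T. r j} = ?b + ?c" using f by (simp add: card_Un_disjoint disjoint_iff)
  have "{j\<in>(S - T) \<union> (T - S). r j} = {j\<in>S - T. r j} \<union> {j\<in>T - S. r j}" by auto
  then have cD: "card {j\<in>(S - T) \<union> (T - S). r j} = ?a + ?b" using f by (simp add: card_Un_disjoint disjoint_iff)
  have e: "card {j\<in>S. r j} + card {j\<in>T. r j} = (?a + ?b) + 2 * ?c" using cS cT by simp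
  have "chi r S * chi r T = (-1) ^ (card {j\<in>S. r j} + card {j\<in>T. r j})"
    unfolding chi_def by (simp add: power_add)
  also have "\<dots> = (-1) ^ (?a + ?b) * ((-1)^2) ^ ?c" unfolding e by (simp only: power_add power_mult)
  also have "\<dots> = (-1) ^ (?a + ?b)" by simp
  finally show ?thesis unfolding chi_def cD .
qed

lemma chi_insert:
  assumes "finite S" "d \<notin> S"
  shows "chi r (insert d S) = (if r d then -1 else 1) * chi r S"
proof (cases "r d")
  case True
  then have "{j\<in>insert d S. r j} = insert d {j\<in>S. r j}" by auto
  then show ?thesis using True assms unfolding chi_def by simp
next
  case False
  then have "{j\<in>insert d S. r j} = {j\<in>S. r j}" by auto
  then show ?thesis using False unfolding chi_def by simp
qed

lemma sum_chi_pair: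
  "(\<Sum>S\<in>Pow {0..<11}. chi r S * chi r' S) = (if agree r r' then 2048 else 0)"
proof (cases "agree r r'")
  case True
  have "(\<Sum>S\<in>Pow {0..<11::nat}. chi r S * chi r' S) = (\<Sum>S\<in>Pow {0..<11::nat}. 1)"
    by (rule sum.cong[OF refl]) (use True chi_agree chi_sq in auto)
  also have "\<dots> = 2048" by (simp add: card_Pow)
  finally show ?thesis using True by simp
next
  case False
  then obtain d where d: "d < 11" "r d \<noteq> r' d" unfolding agree_def by auto
  define J where "J = {0..<11::nat} - {d}"
  have I: "{0..<11} = insert d J" using d unfolding J_def by auto
  have fJ: "finite J" unfolding J_def by simp
  have dJ: "d \<notin> J" unfolding J_def by simp
  let ?h = "\<lambda>S. chi r S * chi r' S"
  have inj: "inj_on (insert d) (Pow J)" using dJ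
    unfolding inj_on_def by (metis Pow_iff insert_ident subset_iff)
  have disj: "Pow J \<inter> insert d ` Pow J = {}" using dJ by auto
  have "(\<Sum>S\<in>Pow {0..<11}. ?h S) = (\<Sum>S\<in>Pow J. ?h S) + (\<Sum>S\<in>insert d ` Pow J. ?h S)"
    unfolding I Pow_insert by (rule sum.union_disjoint) (use fJ disj in auto)
  also have "(\<Sum>S\<in>insert d ` Pow J. ?h S) = (\<Sum>S\<in>Pow J. ?h (insert d S))"
    by (simp add: sum.reindex inj)
  also have "\<dots> = (\<Sum>S\<in>Pow J. - ?h S)"
  proof (rule sum.cong[OF refl])
    fix S assume "S \<in> Pow J"
    then have "finite S" "d \<notin> S" using fJ dJ finite_subset by auto
    then show "?h (insert d S) = - ?h S" using d(2) by (simp add: chi_insert)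
  qed
  finally show ?thesis using False by (simp add: sum_negf)
qed

lemma card_L: "card {S. S \<subseteq> {0..<11::nat} \<and> card S \<le> 2} = 67"
proof -
  let ?I = "{0..<11::nat}"
  have L: "{S. S \<subseteq> ?I \<and> card S \<le> 2} = binom ?I 0 \<union> binom ?I 1 \<union> binom ?I 2"
    by (auto simp: binom_def)
  have "card (binom ?I 0 \<union> binom ?I 1 \<union> binom ?I 2) = card (binom ?I 0) + card (binom ?I 1) + card (binom ?I 2)"
  proof -
    have d1: "binom ?I 0 \<inter> binom ?I 1 = {}" "(binom ?I 0 \<union> binom ?I 1) \<inter> binom ?I 2 = {}"
      by (auto simp: binom_def)
    show ?thesis using card_Un_disjoint[OF _ _ d1(2)] card_Un_disjoint[OF _ _ d1(1)] by simp
  qed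
  also have "\<dots> = 67" by (simp add: card_binom) code_simp
  finally show ?thesis using L by simp
qed

lemma distinct_rows:
  assumes oa: "binary_OA A 11 4 lam" and lam: "lam \<le> 7" and i: "i < length A"
  shows "card {i'\<in>{..<length A}. agree (A!i') (A!i)} \<le> 1"
proof -
  define x where "x = A!i"
  define L where "L = {S. S \<subseteq> {0..<11::nat} \<and> card S \<le> 2}"
  have finL: "finite L" unfolding L_def by (rule finite_subset[of _ "Pow {0..<11}"]) auto
  have cardL: "card L = 67" unfolding L_def by (rule card_L)
  define phi where "phi i' = (\<Sum>S\<in>L. chi x S * chi (A!i') S)" for i'
  have key: "(\<Sum>i'<length A. chi (A!i') S * chi (A!i') T) = (if T = S then 16 * int lam else 0)"
    if S: "S \<in> L" and T: "T \<in> L" for S T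
  proof -
    have fS: "finite S" and fT: "finite T" using S T finite_subset unfolding L_def by auto
    have "(\<Sum>i'<length A. chi (A!i') S * chi (A!i') T) = FF A ((S - T) \<union> (T - S))"
      unfolding FF_def using chi_prod[OF fS fT] by simp
    also have "\<dots> = (if (S - T) \<union> (T - S) = {} then 16 * int lam else 0)"
    proof (rule FF_small[OF oa])
      show "(S - T) \<union> (T - S) \<subseteq> {0..<11}" using S T unfolding L_def by auto
      have "card ((S - T) \<union> (T - S)) \<le> card (S - T) + card (T - S)" by (rule card_Un_le)
      also have "\<dots> \<le> card S + card T" using fS fT by (simp add: add_mono card_mono)
      finally show "card ((S - T) \<union> (T - S)) \<le> 4" using S T unfolding L_def by simp
    qed
    also have "((S - T) \<union> (T - S) = {}) = (T = S)" by auto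
    finally show ?thesis .
  qed
  have upper: "(\<Sum>i'<length A. (phi i')^2) = 67 * (16 * int lam)"
  proof -
    have "(\<Sum>i'<length A. (phi i')^2) = (\<Sum>i'<length A. \<Sum>S\<in>L. \<Sum>T\<in>L. chi x S * chi x T * (chi (A!i') S * chi (A!i') T))"
      unfolding phi_def power2_eq_square sum_product by (simp add: algebra_simps)
    also have "\<dots> = (\<Sum>S\<in>L. \<Sum>T\<in>L. \<Sum>i'<length A. chi x S * chi x T * (chi (A!i') S * chi (A!i') T))"
      by (subst sum.swap) (simp add: sum.swap[of _ L "{..<length A}"])
    also have "\<dots> = (\<Sum>S\<in>L. \<Sum>T\<in>L. chi x S * chi x T * (if T = S then 16 * int lam else 0))"
      by (rule sum.cong[OF refl], rule sum.cong[OF refl]) (simp add: sum_distrib_left[symmetric] key)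
    also have "\<dots> = (\<Sum>S\<in>L. 16 * int lam)"
      by (rule sum.cong[OF refl]) (simp add: finL chi_sq if_distrib cong: if_cong)
    finally show ?thesis using cardL by simp
  qed
  define Ag where "Ag = {i'\<in>{..<length A}. agree (A!i') (A!i)}"
  have lower: "int (card Ag) * 4489 \<le> (\<Sum>i'<length A. (phi i')^2)"
  proof -
    have "(\<Sum>i'\<in>Ag. (phi i')^2) \<le> (\<Sum>i'<length A. (phi i')^2)"
      by (rule sum_mono2) (auto simp: Ag_def)
    moreover have "(\<Sum>i'\<in>Ag. (phi i')^2) = (\<Sum>i'\<in>Ag. 4489)"
    proof (rule sum.cong[OF refl])
      fix i' assume "i' \<in> Ag"
      then have ag: "agree (A!i') x" unfolding Ag_def x_def by simp
      have "phi i' = (\<Sum>S\<in>L. 1)"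
        unfolding phi_def
      proof (rule sum.cong[OF refl])
        fix S assume "S \<in> L"
        then have "S \<subseteq> {0..<11}" by (simp add: L_def)
        then have "chi (A!i') S = chi x S" by (rule chi_agree[OF ag])
        then show "chi x S * chi (A!i') S = 1" using chi_sq by simp
      qed
      then show "(phi i')^2 = 4489" using cardL by simp
    qed
    ultimately show ?thesis by simp
  qed
  have "int (card Ag) * 4489 \<le> 67 * (16 * 7)" using lower upper lam by linarith
  then show ?thesis unfolding Ag_def by simp
qed

lemma parseval:
  assumes oa: "binary_OA A 11 4 lam" and lam: "lam \<le> 7"
  shows "(\<Sum>S\<in>Pow {0..<11}. (FF A S)^2) = 2048 * int (length A)"
proof -
  have "(\<Sum>S\<in>Pow {0..<11}. (FF A S)^2) = (\<Sum>S\<in>Pow {0..<11}. \<Sum>i<length A. \<Sum>i'<length A. chi (A!i) S * chi (A!i') S)"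
    unfolding FF_def power2_eq_square sum_product ..
  also have "\<dots> = (\<Sum>i<length A. \<Sum>i'<length A. \<Sum>S\<in>Pow {0..<11}. chi (A!i) S * chi (A!i') S)"
    by (subst sum.swap) (simp add: sum.swap[of _ "Pow {0..<11}"])
  also have "\<dots> = (\<Sum>i<length A. \<Sum>i'<length A. if agree (A!i') (A!i) then 2048 else 0)"
    by (simp add: sum_chi_pair agree_sym)
  also have "\<dots> = (\<Sum>i<length A. 2048 * int (card {i'\<in>{..<length A}. agree (A!i') (A!i)}))"
  proof (rule sum.cong[OF refl])
    fix i
    have "(\<Sum>i'<length A. if agree (A!i') (A!i) then 2048 else 0) = (\<Sum>i'\<in>{i'\<in>{..<length A}. agree (A!i') (A!i)}. (2048::int))"
      by (rule sum.inter_filter[symmetric]) simp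
    then show "(\<Sum>i'<length A. if agree (A!i') (A!i) then 2048 else 0) = 2048 * int (card {i'\<in>{..<length A}. agree (A!i') (A!i)})"
      by simp
  qed
  also have "\<dots> = (\<Sum>i<length A. 2048)"
  proof (rule sum.cong[OF refl])
    fix i assume i: "i \<in> {..<length A}"
    have "card {i'\<in>{..<length A}. agree (A!i') (A!i)} \<le> 1" using distinct_rows[OF oa lam] i by simp
    moreover have "i \<in> {i'\<in>{..<length A}. agree (A!i') (A!i)}" using i unfolding agree_def by simp
    then have ne: "{i'\<in>{..<length A}. agree (A!i') (A!i)} \<noteq> {}" by blast
    have fin: "finite {i'\<in>{..<length A}. agree (A!i') (A!i)}" by simp
    have "0 < card {i'\<in>{..<length A}. agree (A!i') (A!i)}" using card_gt_0_iff fin ne by blast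
    then have "card {i'\<in>{..<length A}. agree (A!i') (A!i)} \<ge> 1" by simp
    ultimately show "2048 * int (card {i'\<in>{..<length A}. agree (A!i') (A!i)}) = 2048" by simp
  qed
  finally show ?thesis by simp
qed

lemma ee_vals: "ee 5 = 1" "ee 6 = 5" "ee 7 = 15" "ee 8 = 35"
  unfolding ee_def by code_simp+

lemma ch11: "(11::nat) choose 5 = 462" "(11::nat) choose 6 = 462" "(11::nat) choose 7 = 330"
  "(11::nat) choose 8 = 165" "(11::nat) choose 9 = 55"
  by (simp_all add: numeral_eq_Suc)

lemma chsmall: "(6::nat) choose 5 = 6" "(1::nat) choose 0 = 1" "(7::nat) choose 6 = 7" "(2::nat) choose 1 = 2"
  "(8::nat) choose 7 = 8" "(3::nat) choose 2 = 3" "(9::nat) choose 8 = 9" "(4::nat) choose 3 = 4"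
  by (simp_all add: numeral_eq_Suc)

lemma odd_sum_ex:
  fixes v :: "'a \<Rightarrow> int"
  assumes fin: "finite Y" and od: "odd (\<Sum>y\<in>Y. v y)"
  shows "1 \<le> (\<Sum>y\<in>Y. if odd (v y) then 1 else (0::int))"
proof -
  have "\<exists>y\<in>Y. odd (v y)"
  proof (rule ccontr)
    assume "\<not> (\<exists>y\<in>Y. odd (v y))"
    then have "2 dvd (\<Sum>y\<in>Y. v y)" by (intro dvd_sum) auto
    then show False using od by simp
  qed
  then obtain y where y: "y \<in> Y" "odd (v y)" by blast
  have "(if odd (v y) then 1 else (0::int)) \<le> (\<Sum>y\<in>Y. if odd (v y) then 1 else (0::int))"
    by (rule member_le_sum) (use y fin in auto)
  then show ?thesis using y by simp
qed

definition vv :: "(nat \<Rightarrow> bool) list \<Rightarrow> nat set \<Rightarrow> int" where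
  "vv A S = ee (card S) + sig A S"
definition bb :: "(nat \<Rightarrow> bool) list \<Rightarrow> nat set \<Rightarrow> int" where
  "bb A S = (if odd (vv A S) then 1 else 0)"

lemma bb_nonneg: "0 \<le> bb A S" unfolding bb_def by simp

lemma sum_vv:
  assumes X: "finite X" "card X = m" and k: "5 \<le> k"
  shows "(\<Sum>Y\<in>binom X k. vv A Y) = int (m choose k) * ee k + int ((m - 5) choose (k - 5)) * sig A X"
proof -
  have "(\<Sum>Y\<in>binom X k. vv A Y) = (\<Sum>Y\<in>binom X k. ee k + sig A Y)"
    by (rule sum.cong) (auto simp: vv_def binom_def)
  also have "\<dots> = int (card (binom X k)) * ee k + (\<Sum>Y\<in>binom X k. sig A Y)"
    by (simp add: sum.distrib)
  also have "(\<Sum>Y\<in>binom X k. sig A Y) = (\<Sum>Y\<in>binom X k. \<Sum>U\<in>binom Y 5. int (cntp A U (\<lambda>_. True)))"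
    unfolding sig_def ..
  also have "\<dots> = int ((card X - 5) choose (k - 5)) * (\<Sum>U\<in>binom X 5. int (cntp A U (\<lambda>_. True)))"
    by (rule DC) (use X k in auto)
  finally show ?thesis using X by (simp add: card_binom sig_def)
qed

lemma vv_card: "card S = k \<Longrightarrow> vv A S = ee k + sig A S" unfolding vv_def by simp

lemma check_ins:
  assumes fT: "finite T" and cT: "card T = k" and k: "6 \<le> k"
    and od: "odd (vv A T + (\<Sum>U\<in>binom T (k - 1). vv A U))"
  shows "1 \<le> bb A T + (\<Sum>U\<in>binom T (k - 1). bb A U)"
proof -
  have nin: "T \<notin> binom T (k - 1)" using cT k by (auto simp: binom_def)
  have fin: "finite (insert T (binom T (k - 1)))" using fT by simp
  have "odd (\<Sum>y\<in>insert T (binom T (k - 1)). vv A y)" using od nin fT by simp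
  then have "1 \<le> (\<Sum>y\<in>insert T (binom T (k - 1)). bb A y)"
    unfolding bb_def by (rule odd_sum_ex[OF fin])
  then show ?thesis using nin fT by simp
qed

lemma check_plain:
  assumes fT: "finite T" and od: "odd (\<Sum>U\<in>binom T j. vv A U)"
  shows "1 \<le> (\<Sum>U\<in>binom T j. bb A U)"
  unfolding bb_def by (rule odd_sum_ex) (use fT od in auto)

abbreviation "II \<equiv> {0..<11::nat}"

definition WW :: "(nat \<Rightarrow> bool) list \<Rightarrow> nat \<Rightarrow> int" where
  "WW A k = (\<Sum>S\<in>binom II k. bb A S)"

lemma fin_sub: "S \<in> binom II k \<Longrightarrow> finite S"
  unfolding binom_def by (auto intro: finite_subset)

lemma agg_ins:
  assumes k: "6 \<le> k" "k \<le> 11"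
    and ch: "\<And>T. T \<in> binom II k \<Longrightarrow> 1 \<le> bb A T + (\<Sum>U\<in>binom T (k - 1). bb A U)"
  shows "int (11 choose k) \<le> WW A k + int (11 - (k - 1)) * WW A (k - 1)"
proof -
  have "(\<Sum>T\<in>binom II k. (1::int)) \<le> (\<Sum>T\<in>binom II k. bb A T + (\<Sum>U\<in>binom T (k - 1). bb A U))"
    by (rule sum_mono) (rule ch)
  also have "\<dots> = WW A k + (\<Sum>T\<in>binom II k. \<Sum>U\<in>binom T (k - 1). bb A U)"
    unfolding WW_def by (simp add: sum.distrib)
  also have "(\<Sum>T\<in>binom II k. \<Sum>U\<in>binom T (k - 1). bb A U) = int ((card II - (k - 1)) choose (k - (k - 1))) * WW A (k - 1)"
    unfolding WW_def by (rule DC) (use k in auto)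
  also have "k - (k - 1) = 1" using k by simp
  finally show ?thesis by (simp add: card_binom)
qed

lemma agg_plain:
  assumes k: "6 \<le> k" "k \<le> 11"
    and ch: "\<And>T. T \<in> binom II k \<Longrightarrow> 1 \<le> (\<Sum>U\<in>binom T (k - 1). bb A U)"
  shows "int (11 choose k) \<le> int (11 - (k - 1)) * WW A (k - 1)"
proof -
  have "(\<Sum>T\<in>binom II k. (1::int)) \<le> (\<Sum>T\<in>binom II k. (\<Sum>U\<in>binom T (k - 1). bb A U))"
    by (rule sum_mono) (rule ch)
  also have "\<dots> = int ((card II - (k - 1)) choose (k - (k - 1))) * WW A (k - 1)"
    unfolding WW_def by (rule DC) (use k in auto)
  also have "k - (k - 1) = 1" using k by simp
  finally show ?thesis by (simp add: card_binom)
qed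

lemma W_lower: "187 \<le> WW A 5 + WW A 6 + WW A 7 + WW A 8"
proof -
  have a: "int (11 choose 6) \<le> WW A 6 + int (11 - (6 - 1)) * WW A (6 - 1)"
  proof (rule agg_ins)
    fix T assume T: "T \<in> binom II 6"
    have fT: "finite T" using fin_sub[OF T] .
    have cT: "card T = 6" using T by (simp add: binom_def)
    have "vv A T + (\<Sum>U\<in>binom T 5. vv A U) = 11 + 2 * sig A T"
      using sum_vv[OF fT cT, of 5 A] vv_card[OF cT] ee_vals chsmall by simp
    then have od: "odd (vv A T + (\<Sum>U\<in>binom T (6 - 1). vv A U))" by simp
    show "1 \<le> bb A T + (\<Sum>U\<in>binom T (6 - 1). bb A U)" by (rule check_ins[OF fT cT _ od]) simp
  qed simp_all
  have b: "int (11 choose 7) \<le> int (11 - (7 - 1)) * WW A (7 - 1)"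
  proof (rule agg_plain)
    fix T assume T: "T \<in> binom II 7"
    have fT: "finite T" using fin_sub[OF T] .
    have cT: "card T = 7" using T by (simp add: binom_def)
    have "(\<Sum>U\<in>binom T 6. vv A U) = 35 + 2 * sig A T"
      using sum_vv[OF fT cT, of 6 A] ee_vals chsmall by simp
    then have "odd (\<Sum>U\<in>binom T (7 - 1). vv A U)" by simp
    then show "1 \<le> (\<Sum>U\<in>binom T (7 - 1). bb A U)" by (rule check_plain[OF fT])
  qed simp_all
  have c: "int (11 choose 8) \<le> WW A 8 + int (11 - (8 - 1)) * WW A (8 - 1)"
  proof (rule agg_ins)
    fix T assume T: "T \<in> binom II 8"
    have fT: "finite T" using fin_sub[OF T] .
    have cT: "card T = 8" using T by (simp add: binom_def)
    have "vv A T + (\<Sum>U\<in>binom T 7. vv A U) = 155 + 4 * sig A T"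
      using sum_vv[OF fT cT, of 7 A] vv_card[OF cT] ee_vals chsmall by simp
    then have od: "odd (vv A T + (\<Sum>U\<in>binom T (8 - 1). vv A U))" by simp
    show "1 \<le> bb A T + (\<Sum>U\<in>binom T (8 - 1). bb A U)" by (rule check_ins[OF fT cT _ od]) simp
  qed simp_all
  have d: "int (11 choose 9) \<le> int (11 - (9 - 1)) * WW A (9 - 1)"
  proof (rule agg_plain)
    fix T assume T: "T \<in> binom II 9"
    have fT: "finite T" using fin_sub[OF T] .
    have cT: "card T = 9" using T by (simp add: binom_def)
    have "(\<Sum>U\<in>binom T 8. vv A U) = 315 + 4 * sig A T"
      using sum_vv[OF fT cT, of 8 A] ee_vals chsmall by simp
    then have "odd (\<Sum>U\<in>binom T (9 - 1). vv A U)" by simp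
    then show "1 \<le> (\<Sum>U\<in>binom T (9 - 1). bb A U)" by (rule check_plain[OF fT])
  qed simp_all
  from a b c d show ?thesis by (simp add: ch11)
qed

lemma binom0: "binom II 0 = {{}}"
proof (rule set_eqI)
  fix Y
  show "Y \<in> binom II 0 \<longleftrightarrow> Y \<in> {{}}"
  proof
    assume "Y \<in> binom II 0"
    then have "Y \<subseteq> II" "card Y = 0" by (simp_all add: binom_def)
    moreover then have "finite Y" using finite_subset by blast
    ultimately show "Y \<in> {{}}" by simp
  qed (simp add: binom_def)
qed

lemma levels_le:
  fixes f :: "nat set \<Rightarrow> int"
  assumes nn: "\<And>S. 0 \<le> f S"
  shows "f {} + (\<Sum>k\<in>{5,6,7,8}. \<Sum>S\<in>binom II k. f S) \<le> (\<Sum>S\<in>Pow II. f S)"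
proof -
  let ?K = "{0,5,6,7,8::nat}"
  have disj: "\<forall>i\<in>?K. \<forall>j\<in>?K. i \<noteq> j \<longrightarrow> binom II i \<inter> binom II j = {}"
    unfolding binom_def by blast
  have "(\<Sum>S\<in>\<Union>(binom II ` ?K). f S) = (\<Sum>k\<in>?K. \<Sum>S\<in>binom II k. f S)"
    by (rule sum.UNION_disjoint) (use disj in simp_all)
  also have "\<dots> = f {} + (\<Sum>k\<in>{5,6,7,8}. \<Sum>S\<in>binom II k. f S)"
    by (simp add: binom0)
  finally have e: "(\<Sum>S\<in>\<Union>(binom II ` ?K). f S) = f {} + (\<Sum>k\<in>{5,6,7,8}. \<Sum>S\<in>binom II k. f S)" .
  have sub: "\<Union>(binom II ` ?K) \<subseteq> Pow II" unfolding binom_def by blast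
  have "(\<Sum>S\<in>\<Union>(binom II ` ?K). f S) \<le> (\<Sum>S\<in>Pow II. f S)"
    by (rule sum_mono2) (use sub nn in simp_all)
  then show ?thesis using e by simp
qed

lemma sq_ge1:
  assumes "(m::int) \<noteq> 0" shows "1 \<le> m^2"
proof -
  have "0 < m^2" using assms by simp
  then show ?thesis by linarith
qed

lemma ee_odd: "k \<in> {5,6,7,8} \<Longrightarrow> odd (ee k)"
  using ee_vals by auto

lemma no6: "\<not> binary_OA A 11 4 6"
proof
  assume oa: "binary_OA A 11 4 6"
  have len: "length A = 96" using oa unfolding binary_OA_def by simp
  have P: "(\<Sum>S\<in>Pow II. (FF A S)^2) = 2048 * 96" using parseval[OF oa] len by simp
  have F0: "FF A {} = 96" using FF_small[OF oa, of "{}"] by simp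
  have lev: "1024 * WW A k \<le> (\<Sum>S\<in>binom II k. (FF A S)^2)" for k
  proof -
    have "1024 * WW A k = (\<Sum>S\<in>binom II k. 1024 * bb A S)" unfolding WW_def by (simp add: sum_distrib_left)
    also have "\<dots> \<le> (\<Sum>S\<in>binom II k. (FF A S)^2)"
    proof (rule sum_mono)
      fix S assume S: "S \<in> binom II k"
      have SI: "S \<subseteq> II" and cS: "card S = k" using S by (simp_all add: binom_def)
      obtain X where X: "FF A S = 16 * int 6 * ee (card S) - 32 * sig A S + 64 * X" using FF_big[OF oa SI] by blast
      show "1024 * bb A S \<le> (FF A S)^2"
      proof (cases "odd (vv A S)")
        case True
        define m where "m = 3 * ee (card S) - sig A S + 2 * X"
        have FFm: "FF A S = 32 * m" unfolding m_def X by simp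
        have "m = vv A S + 2 * (ee (card S) - sig A S + X)" unfolding m_def vv_def by simp
        then have "odd m" using True by simp
        then have "m \<noteq> 0" by auto
        then have "1 \<le> m^2" by (rule sq_ge1)
        then show ?thesis using FFm True by (simp add: bb_def power_mult_distrib)
      next
        case False then show ?thesis by (simp add: bb_def)
      qed
    qed
    finally show ?thesis .
  qed
  have "(\<Sum>k\<in>{5,6,7,8::nat}. 1024 * WW A k) \<le> (\<Sum>k\<in>{5,6,7,8::nat}. \<Sum>S\<in>binom II k. (FF A S)^2)"
    by (rule sum_mono) (rule lev)
  moreover have "(FF A {})^2 + (\<Sum>k\<in>{5,6,7,8}. \<Sum>S\<in>binom II k. (FF A S)^2) \<le> (\<Sum>S\<in>Pow II. (FF A S)^2)"
    by (rule levels_le) simp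
  ultimately have "1024 * (WW A 5 + WW A 6 + WW A 7 + WW A 8) \<le> 187392"
    using P F0 by simp
  moreover have "1024 * 187 \<le> 1024 * (WW A 5 + WW A 6 + WW A 7 + WW A 8)"
    using W_lower[of A] by (rule mult_left_mono) simp
  ultimately show False by linarith
qed

lemma no7: "\<not> binary_OA A 11 4 7"
proof
  assume oa: "binary_OA A 11 4 7"
  have len: "length A = 112" using oa unfolding binary_OA_def by simp
  have P: "(\<Sum>S\<in>Pow II. (FF A S)^2) = 2048 * 112" using parseval[OF oa] len by simp
  have F0: "FF A {} = 112" using FF_small[OF oa, of "{}"] by simp
  have lev: "256 * int (11 choose k) \<le> (\<Sum>S\<in>binom II k. (FF A S)^2)" if k: "k \<in> {5,6,7,8}" for k
  proof -
    have "256 * int (11 choose k) = (\<Sum>S\<in>binom II k. 256)" by (simp add: card_binom)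
    also have "\<dots> \<le> (\<Sum>S\<in>binom II k. (FF A S)^2)"
    proof (rule sum_mono)
      fix S assume S: "S \<in> binom II k"
      have SI: "S \<subseteq> II" and cS: "card S = k" using S by (simp_all add: binom_def)
      obtain X where X: "FF A S = 16 * int 7 * ee (card S) - 32 * sig A S + 64 * X" using FF_big[OF oa SI] by blast
      define m where "m = 7 * ee k - 2 * sig A S + 4 * X"
      have FFm: "FF A S = 16 * m" unfolding m_def X cS by simp
      have "odd (ee k)" by (rule ee_odd[OF k])
      then have "odd m" unfolding m_def by simp
      then have "m \<noteq> 0" by auto
      then have "1 \<le> m^2" by (rule sq_ge1)
      then show "256 \<le> (FF A S)^2" using FFm by (simp add: power_mult_distrib)
    qed
    finally show ?thesis .
  qed
  have "(\<Sum>k\<in>{5,6,7,8::nat}. 256 * int (11 choose k)) \<le> (\<Sum>k\<in>{5,6,7,8::nat}. \<Sum>S\<in>binom II k. (FF A S)^2)"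
    by (rule sum_mono) (rule lev)
  moreover have "(FF A {})^2 + (\<Sum>k\<in>{5,6,7,8}. \<Sum>S\<in>binom II k. (FF A S)^2) \<le> (\<Sum>S\<in>Pow II. (FF A S)^2)"
    by (rule levels_le) simp
  ultimately show False using P F0 by (simp add: ch11)
qed

theorem theorem1:
  shows "\<not> (\<exists>A. binary_OA A 11 4 6) \<and> \<not> (\<exists>A. binary_OA A 11 4 7)"
  using no6 no7 by blast

end
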